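(* For any $n<\omega$, a partial type $p(x)$ has dp-rank $\le n$ if and only if, for every formula $\varphi(x;y)$, the local dp-rank of $\varphi$ with respect to $p$ is $\le n$.
   Context: $T$ is a complete first-order theory and $\mathfrak{C}$ a monster model; $\mathfrak{C}_y$ denotes the $|y|$-tuples from $\mathfrak{C}$. "Indiscernible sequence" means an order-indiscernible (over $\emptyset$) sequence. For $C\subseteq\mathbb{R}$, $\sim_C$ is the equivalence relation on $\mathbb{Q}$ given by $i\sim_C j$ iff for all $c\in C$, ($c\le i \Leftrightarrow c\le j$) and ($i\le c\Leftrightarrow j\le c$). A partial type $p(x)$ has dp-rank $\le n$ if for every $a\models p$ and every indiscernible sequence $\langle b_i: i\in\mathbb{Q}\rangle$ (of tuples of any finite length) there is $C\subseteq\mathbb{R}$ with $|C|\le n$ such that for all $i,j\in\mathbb{Q}$ with $i\sim_C j$, $\mathrm{tp}(b_i/a)=\mathrm{tp}(b_j/a)$. The local dp-rank of a formula $\varphi(x;y)$ with respect to $p$ is $\le n$ if for every $a\models p$ and every indiscernible sequence $\langle b_i: i\in\mathbb{Q}\rangle$ in $\mathfrak{C}_y$ there is $C\subseteq\mathbb{R}$ with $|C|\le n$ such that for all $i,j\in\mathbb{Q}$ with $i\sim_C j$, $\models \varphi(a;b_i)\leftrightarrow\varphi(a;b_j)$. *)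

theory Defs
  imports Complex_Main
begin

text \<open>A first-order language: function symbols of type 'f and relation symbols
of type 'r; each symbol may be applied to argument lists of any length (so the
language is {(f,n)} for f of type 'f and n a natural number, similarly for relations).\<close>

datatype 'f trm = Var nat | App 'f "'f trm list"

datatype ('f, 'r) fm =
    FF
  | Eq "'f trm" "'f trm"
  | Rel 'r "'f trm list"
  | Neg "('f, 'r) fm"
  | Conj "('f, 'r) fm" "('f, 'r) fm"
  | Ex nat "('f, 'r) fm"

record ('a, 'f, 'r) fo_struct =
  univ :: "'a set"
  funs :: "'f \<Rightarrow> 'a list \<Rightarrow> 'a"
  rels :: "'r \<Rightarrow> 'a list \<Rightarrow> bool"

definition is_structure :: "('a, 'f, 'r) fo_struct \<Rightarrow> bool" where
  "is_structure M \<longleftrightarrow> univ M \<noteq> {} \<and>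
     (\<forall>f as. set as \<subseteq> univ M \<longrightarrow> funs M f as \<in> univ M)"

fun tvars :: "'f trm \<Rightarrow> nat set" where
  "tvars (Var i) = {i}"
| "tvars (App f ts) = (\<Union>t\<in>set ts. tvars t)"

fun fv :: "('f, 'r) fm \<Rightarrow> nat set" where
  "fv FF = {}"
| "fv (Eq s t) = tvars s \<union> tvars t"
| "fv (Rel r ts) = (\<Union>t\<in>set ts. tvars t)"
| "fv (Neg \<phi>) = fv \<phi>"
| "fv (Conj \<phi> \<psi>) = fv \<phi> \<union> fv \<psi>"
| "fv (Ex x \<phi>) = fv \<phi> - {x}"

fun teval :: "('a, 'f, 'r) fo_struct \<Rightarrow> (nat \<Rightarrow> 'a) \<Rightarrow> 'f trm \<Rightarrow> 'a" where
  "teval M e (Var i) = e i"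
| "teval M e (App f ts) = funs M f (map (teval M e) ts)"

fun sat :: "('a, 'f, 'r) fo_struct \<Rightarrow> (nat \<Rightarrow> 'a) \<Rightarrow> ('f, 'r) fm \<Rightarrow> bool" where
  "sat M e FF = False"
| "sat M e (Eq s t) = (teval M e s = teval M e t)"
| "sat M e (Rel r ts) = rels M r (map (teval M e) ts)"
| "sat M e (Neg \<phi>) = (\<not> sat M e \<phi>)"
| "sat M e (Conj \<phi> \<psi>) = (sat M e \<phi> \<and> sat M e \<psi>)"
| "sat M e (Ex x \<phi>) = (\<exists>d\<in>univ M. sat M (e(x := d)) \<phi>)"

text \<open>Satisfaction of a formula under the assignment of the tuple (list) as to the
variables 0, ..., length as - 1.  It is only used for formulas whose free variables
lie among these, so the value given to the remaining variables is irrelevant.\<close>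

definition env :: "('a, 'f, 'r) fo_struct \<Rightarrow> 'a list \<Rightarrow> nat \<Rightarrow> 'a" where
  "env M as = (\<lambda>i. if i < length as then as ! i else (SOME d. d \<in> univ M))"

definition satl :: "('a, 'f, 'r) fo_struct \<Rightarrow> ('f, 'r) fm \<Rightarrow> 'a list \<Rightarrow> bool" where
  "satl M \<phi> as \<longleftrightarrow> sat M (env M as) \<phi>"

definition tuples :: "('a, 'f, 'r) fo_struct \<Rightarrow> nat \<Rightarrow> 'a list set" where
  "tuples M m = {as. length as = m \<and> set as \<subseteq> univ M}"

text \<open>A set of formulas in one free variable x = variable 0 with parameters:
each element is a pair (phi, ps) meaning phi(x, ps), where the parameters ps are
assigned to the variables 1, ..., length ps.\<close>

definition params :: "(('f, 'r) fm \<times> 'a list) set \<Rightarrow> 'a set" where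
  "params \<Sigma> = (\<Union>(\<phi>, ps)\<in>\<Sigma>. set ps)"

definition small :: "('a, 'f, 'r) fo_struct \<Rightarrow> 'a set \<Rightarrow> bool" where
  "small M A \<longleftrightarrow> (card_of A, card_of (univ M)) \<in> ordLess"

definition realizes1 :: "('a, 'f, 'r) fo_struct \<Rightarrow> 'a \<Rightarrow> (('f, 'r) fm \<times> 'a list) set \<Rightarrow> bool" where
  "realizes1 M d \<Sigma> \<longleftrightarrow> d \<in> univ M \<and> (\<forall>(\<phi>, ps)\<in>\<Sigma>. satl M \<phi> (d # ps))"

definition one_type_over :: "('a, 'f, 'r) fo_struct \<Rightarrow> (('f, 'r) fm \<times> 'a list) set \<Rightarrow> bool" where
  "one_type_over M \<Sigma> \<longleftrightarrow>
     (\<forall>(\<phi>, ps)\<in>\<Sigma>. fv \<phi> \<subseteq> {..<Suc (length ps)} \<and> set ps \<subseteq> univ M)"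

text \<open>The complete theory T is
Th(M).\<close>

definition saturated :: "('a, 'f, 'r) fo_struct \<Rightarrow> bool" where
  "saturated M \<longleftrightarrow>
     (\<forall>\<Sigma>. one_type_over M \<Sigma> \<and> small M (params \<Sigma>) \<and>
          (\<forall>\<Sigma>0. finite \<Sigma>0 \<and> \<Sigma>0 \<subseteq> \<Sigma> \<longrightarrow> (\<exists>d. realizes1 M d \<Sigma>0))
        \<longrightarrow> (\<exists>d. realizes1 M d \<Sigma>))"

definition monster :: "('a, 'f, 'r) fo_struct \<Rightarrow> bool" where
  "monster M \<longleftrightarrow> is_structure M \<and> infinite (univ M) \<and>
     (card_of (UNIV :: ('f, 'r) fm set), card_of (univ M)) \<in> ordLess \<and>
     saturated M"

text \<open>A partial type p(x) with |x| = k: a set of formulas phi(x, ps) with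
parameters from a small set; x is assigned to variables 0..k-1 and the
parameters ps to variables k..k+length ps-1.\<close>

definition partial_type :: "('a, 'f, 'r) fo_struct \<Rightarrow> nat \<Rightarrow> (('f, 'r) fm \<times> 'a list) set \<Rightarrow> bool" where
  "partial_type M k p \<longleftrightarrow>
     (\<forall>(\<phi>, ps)\<in>p. fv \<phi> \<subseteq> {..<k + length ps} \<and> set ps \<subseteq> univ M) \<and>
     small M (params p)"

definition realizes :: "('a, 'f, 'r) fo_struct \<Rightarrow> nat \<Rightarrow> 'a list \<Rightarrow> (('f, 'r) fm \<times> 'a list) set \<Rightarrow> bool" where
  "realizes M k a p \<longleftrightarrow> a \<in> tuples M k \<and> (\<forall>(\<phi>, ps)\<in>p. satl M \<phi> (a @ ps))"

definition indiscernible :: "('a, 'f, 'r) fo_struct \<Rightarrow> nat \<Rightarrow> (rat \<Rightarrow> 'a list) \<Rightarrow> bool" where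
  "indiscernible M m b \<longleftrightarrow> (\<forall>i. b i \<in> tuples M m) \<and>
     (\<forall>\<phi> is js. sorted_wrt (<) is \<and> sorted_wrt (<) js \<and> length is = length js \<and>
        fv \<phi> \<subseteq> {..<m * length is} \<longrightarrow>
        (satl M \<phi> (concat (map b is)) \<longleftrightarrow> satl M \<phi> (concat (map b js))))"

text \<open>tp(u / a) = tp(v / a) for m-tuples u, v: they satisfy the same formulas
psi(y, a) (y assigned to variables 0..m-1, a to variables m..m+|a|-1).\<close>

definition same_tp :: "('a, 'f, 'r) fo_struct \<Rightarrow> nat \<Rightarrow> 'a list \<Rightarrow> 'a list \<Rightarrow> 'a list \<Rightarrow> bool" where
  "same_tp M m u v a \<longleftrightarrow>
     (\<forall>\<psi>. fv \<psi> \<subseteq> {..<m + length a} \<longrightarrow> (satl M \<psi> (u @ a) \<longleftrightarrow> satl M \<psi> (v @ a)))"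

definition sim :: "real set \<Rightarrow> rat \<Rightarrow> rat \<Rightarrow> bool" where
  "sim C i j \<longleftrightarrow> (\<forall>c\<in>C. (c \<le> of_rat i \<longleftrightarrow> c \<le> of_rat j) \<and> (of_rat i \<le> c \<longleftrightarrow> of_rat j \<le> c))"

definition dp_rank_le :: "('a, 'f, 'r) fo_struct \<Rightarrow> nat \<Rightarrow> (('f, 'r) fm \<times> 'a list) set \<Rightarrow> nat \<Rightarrow> bool" where
  "dp_rank_le M k p n \<longleftrightarrow>
     (\<forall>a m b. realizes M k a p \<and> indiscernible M m b \<longrightarrow>
        (\<exists>C. finite C \<and> card C \<le> n \<and>
           (\<forall>i j. sim C i j \<longrightarrow> same_tp M m (b i) (b j) a)))"

text \<open>Local dp-rank of phi(x;y), |x| = k (variables 0..k-1), |y| = m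
(variables k..k+m-1), with respect to p.\<close>

definition local_dp_rank_le :: "('a, 'f, 'r) fo_struct \<Rightarrow> nat \<Rightarrow> (('f, 'r) fm \<times> 'a list) set
    \<Rightarrow> ('f, 'r) fm \<Rightarrow> nat \<Rightarrow> nat \<Rightarrow> bool" where
  "local_dp_rank_le M k p \<phi> m n \<longleftrightarrow>
     (\<forall>a b. realizes M k a p \<and> indiscernible M m b \<longrightarrow>
        (\<exists>C. finite C \<and> card C \<le> n \<and>
           (\<forall>i j. sim C i j \<longrightarrow> (satl M \<phi> (a @ b i) \<longleftrightarrow> satl M \<phi> (a @ b j)))))"

end

theory Submission
  imports Defs
begin

fun tren :: "(nat \<Rightarrow> nat) \<Rightarrow> 'f trm \<Rightarrow> 'f trm" where
  "tren \<pi> (Var i) = Var (\<pi> i)"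
| "tren \<pi> (App f ts) = App f (map (tren \<pi>) ts)"

fun ren :: "(nat \<Rightarrow> nat) \<Rightarrow> ('f,'r) fm \<Rightarrow> ('f,'r) fm" where
  "ren \<pi> FF = FF"
| "ren \<pi> (Eq s t) = Eq (tren \<pi> s) (tren \<pi> t)"
| "ren \<pi> (Rel r ts) = Rel r (map (tren \<pi>) ts)"
| "ren \<pi> (Neg \<phi>) = Neg (ren \<pi> \<phi>)"
| "ren \<pi> (Conj \<phi> \<psi>) = Conj (ren \<pi> \<phi>) (ren \<pi> \<psi>)"
| "ren \<pi> (Ex x \<phi>) = Ex (\<pi> x) (ren \<pi> \<phi>)"

lemma teval_tren: "teval M e (tren \<pi> t) = teval M (e \<circ> \<pi>) t"
  by (induction t) (auto cong: map_cong)

lemma tvars_tren: "tvars (tren \<pi> t) = \<pi> ` tvars t"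
  by (induction t) auto

lemma fv_ren: "inj \<pi> \<Longrightarrow> fv (ren \<pi> \<phi>) = \<pi> ` fv \<phi>"
  by (induction \<phi>) (auto simp: tvars_tren image_set_diff)

lemma sat_ren: "inj \<pi> \<Longrightarrow> sat M e (ren \<pi> \<phi>) = sat M (e \<circ> \<pi>) \<phi>"
proof (induction \<phi> arbitrary: e)
  case (Ex x \<phi>)
  have "\<And>d. (e(\<pi> x := d)) \<circ> \<pi> = (e \<circ> \<pi>)(x := d)"
    using Ex.prems by (auto simp: fun_eq_iff inj_eq)
  then show ?case using Ex.IH[OF Ex.prems] by (simp add: comp_def del: fun_upd_apply)
qed (auto simp: teval_tren comp_def)

lemma teval_agree: "(\<forall>v\<in>tvars t. e1 v = e2 v) \<Longrightarrow> teval M e1 t = teval M e2 t"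
  by (induction t) (auto cong: map_cong)

lemma sat_agree: "(\<forall>v\<in>fv \<phi>. e1 v = e2 v) \<Longrightarrow> sat M e1 \<phi> = sat M e2 \<phi>"
proof (induction \<phi> arbitrary: e1 e2)
  case (Eq s t) then show ?case using teval_agree[of s e1 e2 M] teval_agree[of t e1 e2 M] by auto
next
  case (Rel r ts)
  have "map (teval M e1) ts = map (teval M e2) ts"
    using Rel by (auto intro!: teval_agree)
  then show ?case by (simp only: sat.simps)
next
  case (Ex x \<phi>)
  have "\<And>d. sat M (e1(x:=d)) \<phi> = sat M (e2(x:=d)) \<phi>"
    using Ex.prems by (intro Ex.IH) auto
  then show ?case by simp
next
  case (Conj \<phi>1 \<phi>2)
  have "sat M e1 \<phi>1 = sat M e2 \<phi>1" "sat M e1 \<phi>2 = sat M e2 \<phi>2"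
    using Conj.prems by (auto intro!: Conj.IH)
  then show ?case by simp
qed auto

lemma satl_ren:
  assumes "inj \<pi>" "fv \<phi> \<subseteq> A"
    "\<And>v. v \<in> A \<Longrightarrow> \<pi> v < length xs \<and> v < length ys \<and> xs ! (\<pi> v) = ys ! v"
  shows "satl M (ren \<pi> \<phi>) xs = satl M \<phi> ys"
  unfolding satl_def using assms
  by (auto simp: sat_ren env_def intro!: sat_agree)

lemma tuples_len: "xs \<in> tuples M m \<Longrightarrow> length xs = m"
  by (simp add: tuples_def)

lemma indisc_len: "indiscernible M m b \<Longrightarrow> length (b i) = m"
  by (simp add: indiscernible_def tuples_def)

lemma realizes_len: "realizes M k a p \<Longrightarrow> length a = k"
  by (simp add: realizes_def tuples_def)

definition swp :: "nat \<Rightarrow> nat \<Rightarrow> nat \<Rightarrow> nat" where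
  "swp k m q = (if q < k then q + m else if q < k + m then q - k else q)"

lemma inj_swp: "inj (swp k m)"
  unfolding inj_def swp_def by auto

lemma swp_satl:
  assumes "fv \<phi> \<subseteq> {..<k+m}" "length a = k" "length u = m"
  shows "satl M (ren (swp k m) \<phi>) (u @ a) = satl M \<phi> (a @ u)"
  by (rule satl_ren[OF inj_swp assms(1)]) (use assms in \<open>auto simp: swp_def nth_append\<close>)

lemma fv_swp: "fv \<phi> \<subseteq> {..<k+m} \<Longrightarrow> fv (ren (swp k m) \<phi>) \<subseteq> {..<m+k}"
  by (auto simp: fv_ren[OF inj_swp] swp_def)

lemma forward:
  assumes "dp_rank_le M k p n" "fv \<phi> \<subseteq> {..<k+m}"
  shows "local_dp_rank_le M k p \<phi> m n"
  unfolding local_dp_rank_le_def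
proof (intro allI impI)
  fix a b assume ab: "realizes M k a p \<and> indiscernible M m b"
  then obtain C where C: "finite C" "card C \<le> n" "\<forall>i j. sim C i j \<longrightarrow> same_tp M m (b i) (b j) a"
    using assms(1) unfolding dp_rank_le_def by blast
  have la: "length a = k" using ab realizes_len by blast
  show "\<exists>C. finite C \<and> card C \<le> n \<and> (\<forall>i j. sim C i j \<longrightarrow> (satl M \<phi> (a @ b i) \<longleftrightarrow> satl M \<phi> (a @ b j)))"
  proof (intro exI conjI allI impI)
    fix i j assume "sim C i j"
    then have "same_tp M m (b i) (b j) a" using C by blast
    then have "satl M (ren (swp k m) \<phi>) (b i @ a) = satl M (ren (swp k m) \<phi>) (b j @ a)"
      unfolding same_tp_def using fv_swp[OF assms(2)] la by auto
    then show "satl M \<phi> (a @ b i) = satl M \<phi> (a @ b j)"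
      using swp_satl[OF assms(2) la] indisc_len ab by metis
  qed (use C in auto)
qed

definition valid :: "real set \<Rightarrow> (rat \<Rightarrow> bool) \<Rightarrow> bool" where
  "valid C f \<longleftrightarrow> (\<forall>i j. sim C i j \<longrightarrow> f i = f j)"

definition Dset :: "(rat \<Rightarrow> bool) \<Rightarrow> real set" where
  "Dset f = {c. \<forall>\<epsilon>>0. \<exists>i j. \<bar>of_rat i - c\<bar> < \<epsilon> \<and> \<bar>of_rat j - c\<bar> < \<epsilon> \<and> f i \<noteq> f j}"

lemma sim_free:
  assumes "of_rat i \<le> (of_rat j :: real)" "\<And>c. c \<in> C \<Longrightarrow> \<not> (of_rat i \<le> c \<and> c \<le> of_rat j)"
  shows "sim C i j"
  unfolding sim_def
proof
  fix c assume "c \<in> C"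
  with assms(2) have "\<not> (of_rat i \<le> c \<and> c \<le> of_rat j)" by blast
  with assms(1) show "(c \<le> of_rat i \<longleftrightarrow> c \<le> of_rat j) \<and> (of_rat i \<le> c \<longleftrightarrow> of_rat j \<le> c)"
    by linarith
qed

lemma sim_sym: "sim C i j \<Longrightarrow> sim C j i"
  unfolding sim_def by blast

lemma sim_mono: "C \<subseteq> C' \<Longrightarrow> sim C' i j \<Longrightarrow> sim C i j"
  unfolding sim_def by blast

lemma valid_mono: "C \<subseteq> C' \<Longrightarrow> valid C f \<Longrightarrow> valid C' f"
  unfolding valid_def using sim_mono by blast

lemma F1:
  assumes "finite C" "valid C f"
  shows "Dset f \<subseteq> C"
proof
  fix c assume cD: "c \<in> Dset f"
  show "c \<in> C"
  proof (rule ccontr)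
    assume cC: "c \<notin> C"
    define \<epsilon> where "\<epsilon> = Min (insert 1 ((\<lambda>x. \<bar>c - x\<bar>) ` C))"
    have fin: "finite (insert 1 ((\<lambda>x. \<bar>c - x\<bar>) ` C))" using assms(1) by simp
    have epos: "\<epsilon> > 0" unfolding \<epsilon>_def using fin cC by (auto simp: Min_gr_iff)
    have ele: "\<And>x. x \<in> C \<Longrightarrow> \<epsilon> \<le> \<bar>c - x\<bar>" unfolding \<epsilon>_def using fin by auto
    obtain i j where ij: "\<bar>of_rat i - c\<bar> < \<epsilon>" "\<bar>of_rat j - c\<bar> < \<epsilon>" "f i \<noteq> f j"
      using cD epos unfolding Dset_def by blast
    have "sim C i j" unfolding sim_def
    proof
      fix x assume "x \<in> C"
      then have "\<epsilon> \<le> \<bar>c - x\<bar>" by (rule ele)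
      with ij(1,2) show "(x \<le> of_rat i \<longleftrightarrow> x \<le> of_rat j) \<and> (of_rat i \<le> x \<longleftrightarrow> of_rat j \<le> x)"
        by (cases "x \<le> c") (auto simp: abs_if split: if_splits)
    qed
    with assms(2) ij(3) show False unfolding valid_def by blast
  qed
qed

lemma F2_aux:
  assumes "finite C" "valid C f"
  shows "\<forall>i j. of_rat i \<le> (of_rat j::real) \<and> (\<forall>d\<in>Dset f. \<not>(of_rat i \<le> d \<and> d \<le> of_rat j))
     \<and> card (C \<inter> {of_rat i..of_rat j}) = N \<longrightarrow> f i = f j"
proof (induction N rule: less_induct)
  case (less N)
  show ?case
  proof (intro allI impI)
    fix i j assume H: "of_rat i \<le> (of_rat j::real) \<and> (\<forall>d\<in>Dset f. \<not>(of_rat i \<le> d \<and> d \<le> of_rat j))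
     \<and> card (C \<inter> {of_rat i..of_rat j}) = N"
    define S where "S = C \<inter> {of_rat i..of_rat j}"
    have finS: "finite S" using assms(1) S_def by simp
    show "f i = f j"
    proof (cases "S = {}")
      case True
      have "sim C i j" by (rule sim_free) (use H True S_def in auto)
      then show ?thesis using assms(2) valid_def by blast
    next
      case False
      define c where "c = Min S"
      have cS: "c \<in> S" using finS False c_def by simp
      have cmin: "\<And>x. x \<in> S \<Longrightarrow> c \<le> x" using finS c_def by simp
      have ci: "of_rat i \<le> c" "c \<le> of_rat j" "c \<in> C" using cS S_def by auto
      have "c \<notin> Dset f" using H ci by blast
      then obtain \<epsilon> where epos: "\<epsilon> > 0" and
        loc: "\<And>a b. \<bar>of_rat a - c\<bar> < \<epsilon> \<Longrightarrow> \<bar>of_rat b - c\<bar> < \<epsilon> \<Longrightarrow> f a = f b"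
        unfolding Dset_def by blast
      obtain r where r: "\<bar>of_rat r - c\<bar> < \<epsilon>" "f i = f r"
      proof (cases "\<bar>of_rat i - c\<bar> < \<epsilon>")
        case True then show ?thesis using that by blast
      next
        case False
        then have ile: "of_rat i \<le> c - \<epsilon>" using ci by linarith
        obtain r where r: "c - \<epsilon> < of_rat r" "of_rat r < c" using of_rat_dense[of "c - \<epsilon>" c] epos by auto
        have "sim C i r"
        proof (rule sim_free)
          show "of_rat i \<le> (of_rat r :: real)" using ile r by linarith
        next
          fix d assume "d \<in> C"
          show "\<not> (of_rat i \<le> d \<and> d \<le> of_rat r)"
          proof
            assume "of_rat i \<le> d \<and> d \<le> of_rat r"
            then have "d \<in> S" using \<open>d \<in> C\<close> r ci S_def by auto
            then have "c \<le> d" by (rule cmin)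
            then show False using \<open>of_rat i \<le> d \<and> d \<le> of_rat r\<close> r by linarith
          qed
        qed
        then have "f i = f r" using assms(2) valid_def by blast
        moreover have "\<bar>of_rat r - c\<bar> < \<epsilon>" using r by (auto simp: abs_less_iff)
        ultimately show ?thesis using that by blast
      qed
      obtain r' where r': "\<bar>of_rat r' - c\<bar> < \<epsilon>" "f r' = f j"
      proof (cases "\<bar>of_rat j - c\<bar> < \<epsilon>")
        case True then show ?thesis using that by blast
      next
        case False
        then have jge: "c + \<epsilon> \<le> of_rat j" using ci by linarith
        obtain r where r: "c < of_rat r" "of_rat r < c + \<epsilon>" using of_rat_dense[of c "c + \<epsilon>"] epos by auto
        have sub: "C \<inter> {of_rat r..of_rat j} \<subseteq> S - {c}" using S_def r ci by auto
        have "card (C \<inter> {of_rat r..of_rat j}) < N"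
        proof -
          have "card (C \<inter> {of_rat r..of_rat j}) \<le> card (S - {c})"
            using sub finS by (intro card_mono) auto
          also have "\<dots> < card S" using finS cS by (meson card_Diff1_less)
          finally show ?thesis using H S_def by simp
        qed
        moreover have "of_rat r \<le> (of_rat j::real)" using r jge by linarith
        moreover have "\<forall>d\<in>Dset f. \<not>(of_rat r \<le> d \<and> d \<le> of_rat j)"
        proof (intro ballI notI)
          fix d assume "d \<in> Dset f" "of_rat r \<le> d \<and> d \<le> of_rat j"
          moreover have "of_rat i \<le> d" using calculation(2) r ci by linarith
          ultimately show False using H by blast
        qed
        ultimately have "f r = f j" using less.IH by blast
        moreover have "\<bar>of_rat r - c\<bar> < \<epsilon>" using r by (auto simp: abs_less_iff)
        ultimately show ?thesis using that by blast
      qed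
      have "f r = f r'" using loc r(1) r'(1) by blast
      then show ?thesis using r r' by simp
    qed
  qed
qed

lemma F2:
  assumes "finite C" "valid C f"
  shows "valid (Dset f) f"
  unfolding valid_def
proof (intro allI impI)
  fix i j assume s: "sim (Dset f) i j"
  have key: "f i = f j" if "sim (Dset f) i j" "of_rat i < (of_rat j::real)" for i j
  proof -
    have "\<forall>d\<in>Dset f. \<not>(of_rat i \<le> d \<and> d \<le> of_rat j)"
    proof (intro ballI notI)
      fix d assume "d \<in> Dset f" "of_rat i \<le> d \<and> d \<le> of_rat j"
      with that(1) have "(of_rat i \<le> d \<longleftrightarrow> of_rat j \<le> d)" "(d \<le> of_rat i \<longleftrightarrow> d \<le> of_rat j)"
        unfolding sim_def by auto
      then have "d = of_rat i" "d = of_rat j" using \<open>of_rat i \<le> d \<and> d \<le> of_rat j\<close> by auto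
      then show False using that(2) by linarith
    qed
    then show ?thesis using F2_aux[OF assms] that(2) less_imp_le by blast
  qed
  show "f i = f j"
  proof (cases "of_rat i < (of_rat j::real)")
    case True then show ?thesis using key s by blast
  next
    case False
    show ?thesis
    proof (cases "i = j")
      case True then show ?thesis by simp
    next
      case False
      then have "of_rat j < (of_rat i::real)" using \<open>\<not> of_rat i < (of_rat j::real)\<close>
        by (metis linorder_neqE_linordered_idom of_rat_eq_iff)
      then show ?thesis using key[of j i] sim_sym[OF s] by auto
    qed
  qed
qed

lemma concat_nth_uniform:
  "(\<forall>x\<in>set xs. length x = m) \<Longrightarrow> p < length xs \<Longrightarrow> j < m \<Longrightarrow> concat xs ! (p*m + j) = xs ! p ! j"
proof (induction xs arbitrary: p)
  case Nil then show ?case by simp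
next
  case (Cons x xs)
  show ?case
  proof (cases p)
    case 0 then show ?thesis using Cons by (simp add: nth_append)
  next
    case (Suc p')
    have "concat (x # xs) ! (p*m + j) = concat xs ! (p'*m + j)"
      using Cons.prems Suc by (simp add: nth_append)
    then show ?thesis using Cons Suc by simp
  qed
qed

lemma length_concat_uniform: "(\<forall>x\<in>set xs. length x = m) \<Longrightarrow> length (concat xs) = length xs * m"
  by (induction xs) auto

lemma blk_lt: "l < T \<Longrightarrow> j < (m::nat) \<Longrightarrow> l*m + j < T*m"
proof -
  assume a: "l < T" "j < m"
  have "l*m + j < (l+1)*m" using a by simp
  also have "\<dots> \<le> T*m" using a by (intro mult_right_mono) auto
  finally show ?thesis .
qed

lemma divmod_uniq: "(j::nat) < m \<Longrightarrow> (a*m + j) div m = a \<and> (a*m + j) mod m = j"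
  by auto

lemma sorted_blocks:
  assumes "\<And>l. l < T \<Longrightarrow> strict_mono (hs l :: rat \<Rightarrow> rat)"
    "\<And>l l' i i'. l < l' \<Longrightarrow> l' < T \<Longrightarrow> hs l i < hs l' i'"
    "sorted_wrt (<) is"
  shows "sorted_wrt (<) (concat (map (\<lambda>l. map (hs l) is) [0..<T]))"
  using assms(1,2)
proof (induction T)
  case 0 then show ?case by simp
next
  case (Suc T)
  have "sorted_wrt (<) (map (hs T) is)"
    using assms(3) Suc.prems(1)[of T] by (auto simp: sorted_wrt_map strict_mono_less elim!: sorted_wrt_mono_rel[rotated])
  moreover have "sorted_wrt (<) (concat (map (\<lambda>l. map (hs l) is) [0..<T]))"
    using Suc by auto
  ultimately show ?case using Suc.prems(2) by (auto simp: sorted_wrt_append)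
qed

definition bcomb :: "nat \<Rightarrow> (nat \<Rightarrow> rat \<Rightarrow> rat) \<Rightarrow> (rat \<Rightarrow> 'a list) \<Rightarrow> rat \<Rightarrow> 'a list" where
  "bcomb T hs b i = concat (map (\<lambda>l. b (hs l i)) [0..<T])"

definition tau :: "nat \<Rightarrow> nat \<Rightarrow> nat \<Rightarrow> nat \<Rightarrow> nat" where
  "tau T m L q = (if q < T*m*L then ((q mod (T*m)) div m * L + q div (T*m)) * m + (q mod (T*m)) mod m else q)"

lemma tau_decomp:
  assumes "q < T*m*L"
  obtains p l j where "p < L" "l < T" "j < m" "q = p*(T*m) + (l*m + j)"
    "tau T m L q = (l*L + p)*m + j"
proof -
  have Tm: "T*m > 0" using assms by (cases "T*m = 0") auto
  then have m: "m > 0" by simp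
  define p where "p = q div (T*m)"
  define r where "r = q mod (T*m)"
  have "p < L" using assms Tm unfolding p_def by (simp add: less_mult_imp_div_less mult.commute)
  moreover have "r < T*m" using Tm r_def by simp
  then have "r div m < T" by (simp add: less_mult_imp_div_less)
  moreover have "r mod m < m" using m by simp
  moreover have "q = p*(T*m) + ((r div m)*m + r mod m)" unfolding p_def r_def by (metis div_mult_mod_eq)
  moreover have "tau T m L q = ((r div m)*L + p)*m + r mod m" using assms unfolding tau_def p_def r_def by simp
  ultimately show ?thesis using that by blast
qed

lemma tau_lt: "q < T*m*L \<Longrightarrow> tau T m L q < T*m*L"
proof -
  assume q: "q < T*m*L"
  then obtain p l j where pl: "p < L" "l < T" "j < m" "tau T m L q = (l*L + p)*m + j"
    by (rule tau_decomp)
  have "l*L + p < T*L"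
  proof -
    have "l*L + p < (l+1)*L" using pl by simp
    also have "\<dots> \<le> T*L" using pl by (intro mult_right_mono) auto
    finally show ?thesis .
  qed
  then have "l*L + p + 1 \<le> T*L" by simp
  then have "(l*L+p)*m + m \<le> T*L*m" using mult_right_mono[of "l*L+p+1" "T*L" m] by (simp add: algebra_simps)
  then show ?thesis using pl by (simp add: algebra_simps)
qed

lemma inj_tau: "inj (tau T m L)"
proof (rule injI)
  fix x y assume e: "tau T m L x = tau T m L y"
  consider "x < T*m*L" "y < T*m*L" | "x < T*m*L" "\<not> y < T*m*L" | "\<not> x < T*m*L" "y < T*m*L"
    | "\<not> x < T*m*L" "\<not> y < T*m*L" by blast
  then show "x = y"
  proof cases
    case 1
    obtain p l j where A: "p < L" "l < T" "j < m" "x = p*(T*m) + (l*m + j)" "tau T m L x = (l*L + p)*m + j"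
      using 1(1) by (rule tau_decomp)
    obtain p' l' j' where B: "p' < L" "l' < T" "j' < m" "y = p'*(T*m) + (l'*m + j')" "tau T m L y = (l'*L + p')*m + j'"
      using 1(2) by (rule tau_decomp)
    have "(l*L + p)*m + j = (l'*L + p')*m + j'" using e A B by simp
    then have "l*L + p = l'*L + p'" "j = j'" using divmod_uniq[OF A(3), of "l*L+p"] divmod_uniq[OF B(3), of "l'*L+p'"]
      by metis+
    then have "l = l'" "p = p'" using divmod_uniq[OF A(1), of l] divmod_uniq[OF B(1), of l'] by metis+
    then show ?thesis using A B \<open>j = j'\<close> by simp
  next
    case 2 then show ?thesis using e tau_lt[of x T m L] by (simp add: tau_def)
  next
    case 3 then show ?thesis using e tau_lt[of y T m L] by (simp add: tau_def)
  next
    case 4 then show ?thesis using e by (simp add: tau_def)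
  qed
qed

lemma bcomb_indisc:
  fixes M :: "('a,'f,'r) fo_struct"
  assumes ind: "indiscernible M m b"
    and mono: "\<And>l. l < T \<Longrightarrow> strict_mono (hs l :: rat \<Rightarrow> rat)"
    and sep: "\<And>l l' i i'. l < l' \<Longrightarrow> l' < T \<Longrightarrow> hs l i < hs l' i'"
  shows "indiscernible M (T*m) (bcomb T hs b)"
proof -
  have lenb: "\<And>i. length (b i) = m" and tb: "\<And>i. b i \<in> tuples M m"
    using ind by (auto simp: indiscernible_def tuples_def)
  have lenb': "\<And>i. length (bcomb T hs b i) = T*m"
    unfolding bcomb_def by (subst length_concat_uniform) (auto simp: lenb)
  define S where "S = (\<lambda>is. concat (map (\<lambda>l. map (\<lambda>i. hs l i) is) [0..<T]))"
  have lenS: "length (S is) = T * length is" for "is"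
    unfolding S_def by (subst length_concat_uniform) auto
  have key: "satl M \<phi> (concat (map (bcomb T hs b) is)) = satl M (ren (tau T m (length is)) \<phi>) (concat (map b (S is)))"
    if fv: "fv \<phi> \<subseteq> {..<T*m*length is}" for \<phi> "is"
  proof (rule satl_ren[OF inj_tau fv, symmetric])
    fix v assume v: "v \<in> {..<T*m*length is}"
    let ?L = "length is"
    obtain p l j where A: "p < ?L" "l < T" "j < m" "v = p*(T*m) + (l*m + j)" "tau T m ?L v = (l*?L + p)*m + j"
      using v by (auto elim: tau_decomp)
    have l1: "length (concat (map b (S is))) = T*?L*m"
      by (subst length_concat_uniform) (auto simp: lenb lenS)
    have l2: "length (concat (map (bcomb T hs b) is)) = ?L*(T*m)"
      by (subst length_concat_uniform) (auto simp: lenb')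
    have "concat (map (bcomb T hs b) is) ! v = bcomb T hs b (is ! p) ! (l*m + j)"
      using A by (subst A(4), subst concat_nth_uniform) (auto simp: lenb' blk_lt)
    also have "\<dots> = b (hs l (is ! p)) ! j"
      unfolding bcomb_def using A by (subst concat_nth_uniform) (auto simp: lenb)
    finally have e1: "concat (map (bcomb T hs b) is) ! v = b (hs l (is ! p)) ! j" .
    have Snth: "S is ! (l*?L + p) = hs l (is ! p)"
      unfolding S_def using A by (subst concat_nth_uniform) auto
    have bd: "l*?L + p < length (S is)" using blk_lt[OF A(2,1)] by (simp add: lenS)
    have "concat (map b (S is)) ! ((l*?L + p)*m + j) = b (S is ! (l*?L + p)) ! j"
      using bd A by (subst concat_nth_uniform) (auto simp: lenb)
    then show "tau T m ?L v < length (concat (map b (S is))) \<and> v < length (concat (map (bcomb T hs b) is)) \<and>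
      concat (map b (S is)) ! tau T m ?L v = concat (map (bcomb T hs b) is) ! v"
      using tau_lt[of v T m ?L] v l1 l2 A(5) e1 Snth by (simp add: algebra_simps)
  qed
  show ?thesis unfolding indiscernible_def
  proof (intro conjI allI impI)
    fix i show "bcomb T hs b i \<in> tuples M (T*m)"
      using tb lenb' unfolding tuples_def bcomb_def by auto
  next
    fix \<phi> :: "('f,'r) fm" and "is" js :: "rat list"
    assume H: "sorted_wrt (<) is \<and> sorted_wrt (<) js \<and> length is = length js \<and> fv \<phi> \<subseteq> {..<T * m * length is}"
    let ?\<psi> = "ren (tau T m (length is)) \<phi>"
    have fvpsi: "fv ?\<psi> \<subseteq> {..<m * length (S is)}"
      using H tau_lt by (auto simp: fv_ren[OF inj_tau] lenS algebra_simps)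
    have sS: "sorted_wrt (<) (S is)" "sorted_wrt (<) (S js)"
      unfolding S_def using H by (auto intro!: sorted_blocks mono sep)
    have "satl M ?\<psi> (concat (map b (S is))) = satl M ?\<psi> (concat (map b (S js)))"
      using ind sS fvpsi H lenS unfolding indiscernible_def by metis
    then show "satl M \<phi> (concat (map (bcomb T hs b) is)) = satl M \<phi> (concat (map (bcomb T hs b) js))"
    proof -
      have k1: "satl M \<phi> (concat (map (bcomb T hs b) is)) = satl M ?\<psi> (concat (map b (S is)))"
        using key[of \<phi> "is"] H by blast
      have k2: "satl M \<phi> (concat (map (bcomb T hs b) js)) = satl M ?\<psi> (concat (map b (S js)))"
        using key[of \<phi> js] H by metis
      show ?thesis using k1 k2 \<open>satl M ?\<psi> (concat (map b (S is))) = satl M ?\<psi> (concat (map b (S js)))\<close> by simp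
    qed
  qed
qed

definition xorfm :: "('f,'r) fm \<Rightarrow> ('f,'r) fm \<Rightarrow> ('f,'r) fm" where
  "xorfm A B = Neg (Conj (Neg (Conj A (Neg B))) (Neg (Conj (Neg A) B)))"

fun fxor :: "('f,'r) fm list \<Rightarrow> ('f,'r) fm" where
  "fxor [] = FF"
| "fxor (\<phi> # \<phi>s) = xorfm \<phi> (fxor \<phi>s)"

lemma sat_fxor: "sat M e (fxor \<phi>s) = foldr (\<lambda>x acc. x \<noteq> acc) (map (sat M e) \<phi>s) False"
  by (induction \<phi>s) (auto simp: xorfm_def)

lemma fv_fxor: "fv (fxor \<phi>s) = (\<Union>\<phi>\<in>set \<phi>s. fv \<phi>)"
  by (induction \<phi>s) (auto simp: xorfm_def)

lemma xor_diff:
  "length xs = length ys \<Longrightarrow> l < length xs \<Longrightarrow> xs ! l \<noteq> ys ! l \<Longrightarrow>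
   (\<forall>i<length xs. i \<noteq> l \<longrightarrow> xs ! i = ys ! i) \<Longrightarrow>
   foldr (\<lambda>x acc. x \<noteq> acc) xs False \<noteq> foldr (\<lambda>x acc. x \<noteq> acc) ys False"
proof (induction xs arbitrary: ys l)
  case Nil then show ?case using Nil.prems(2) by (simp only: list.size less_nat_zero_code)
next
  case (Cons x xs)
  obtain y ys' where ys: "ys = y # ys'" using Cons.prems(1) by (cases ys) auto
  have len: "length xs = length ys'" using Cons.prems(1) ys by simp
  show ?case
  proof (cases l)
    case 0
    then have "x \<noteq> y" using Cons.prems(3) ys by simp
    moreover have "xs = ys'"
    proof (rule nth_equalityI)
      show "length xs = length ys'" by (rule len)
      fix i assume i: "i < length xs"
      have "(x # xs) ! Suc i = ys ! Suc i"
        by (rule Cons.prems(4)[rule_format]) (use i 0 in simp_all)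
      then show "xs ! i = ys' ! i" unfolding ys by (simp only: nth_Cons_Suc)
    qed
    ultimately show ?thesis unfolding ys by (simp only: foldr.simps comp_apply) blast
  next
    case (Suc l')
    have "(x # xs) ! 0 = ys ! 0"
      by (rule Cons.prems(4)[rule_format]) (use Suc in simp_all)
    then have "x = y" unfolding ys by (simp only: nth_Cons_0)
    moreover have "foldr (\<lambda>x acc. x \<noteq> acc) xs False \<noteq> foldr (\<lambda>x acc. x \<noteq> acc) ys' False"
    proof (rule Cons.IH)
      show "length xs = length ys'" by (rule len)
      show "l' < length xs" using Cons.prems(2) Suc by simp
      show "xs ! l' \<noteq> ys' ! l'" using Cons.prems(3) Suc ys by simp
      show "\<forall>i<length xs. i \<noteq> l' \<longrightarrow> xs ! i = ys' ! i"
      proof (intro allI impI)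
        fix i assume i: "i < length xs" "i \<noteq> l'"
        have "(x # xs) ! Suc i = ys ! Suc i"
          by (rule Cons.prems(4)[rule_format]) (use i Suc in simp_all)
        then show "xs ! i = ys' ! i" unfolding ys by (simp only: nth_Cons_Suc)
      qed
    qed
    ultimately show ?thesis unfolding ys by (simp only: foldr.simps comp_apply) blast
  qed
qed

definition sig :: "rat \<Rightarrow> rat" where "sig x = x / (1 + \<bar>x\<bar>)"

lemma sig_den: "(0::rat) < 1 + \<bar>x\<bar>"
  by (rule add_pos_nonneg) simp_all

lemma sig_bound: "\<bar>sig x\<bar> < 1"
proof -
  have "\<bar>sig x\<bar> = \<bar>x\<bar> / (1 + \<bar>x\<bar>)"
    unfolding sig_def abs_divide using sig_den[of x] by (simp only: abs_of_pos)
  also have "\<dots> < 1" by (rule divide_less_eq_1_pos[THEN iffD2]) (rule sig_den, simp)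
  finally show ?thesis .
qed

lemma sig_neg: "x < 0 \<Longrightarrow> sig x < 0"
  unfolding sig_def by (rule divide_neg_pos) (simp_all add: sig_den)

lemma sig_pos: "x > 0 \<Longrightarrow> sig x > 0"
  unfolding sig_def by (rule divide_pos_pos) (simp_all add: sig_den)

lemma sig_0: "sig 0 = 0"
  unfolding sig_def by simp

lemma sig_mono: "x < y \<Longrightarrow> sig x < sig y"
proof -
  assume xy: "x < y"
  define A where "A = 1 + \<bar>x\<bar>"
  define B where "B = 1 + \<bar>y\<bar>"
  have A: "A > 0" and B: "B > 0" unfolding A_def B_def by (simp_all add: add_pos_nonneg)
  have key: "x * B < y * A"
  proof (cases "x \<ge> 0")
    case True
    then have "y \<ge> 0" using xy by simp
    then have "x * B = x + x*y" "y * A = y + x*y" using True unfolding A_def B_def by (simp_all add: algebra_simps)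
    then show ?thesis using xy by simp
  next
    case False
    show ?thesis
    proof (cases "y \<ge> 0")
      case True
      have "x*y \<le> 0" using False True by (simp add: mult_nonpos_nonneg)
      moreover have "x * B = x + x*y" "y * A = y - x*y" using False True unfolding A_def B_def by (simp_all add: algebra_simps)
      ultimately show ?thesis using xy by simp
    next
      case False2: False
      have "x * B = x - x*y" "y * A = y - x*y" using False False2 unfolding A_def B_def by (simp_all add: algebra_simps)
      then show ?thesis using xy by simp
    qed
  qed
  have "sig x = (x * B) / (A * B)" unfolding sig_def A_def[symmetric] using B by simp
  moreover have "sig y = (y * A) / (A * B)" unfolding sig_def B_def[symmetric] using A by (simp add: mult.commute)
  moreover have "(x * B) / (A * B) < (y * A) / (A * B)" using key A B by (intro divide_strict_right_mono) auto
  ultimately show ?thesis by simp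
qed

lemma valid_sides:
  assumes "valid C f" "\<And>x. x \<in> C \<Longrightarrow> x \<noteq> c \<Longrightarrow> \<delta> \<le> \<bar>x - c\<bar>"
  shows "c - \<delta> < of_rat x \<Longrightarrow> of_rat x < c \<Longrightarrow> c - \<delta> < of_rat y \<Longrightarrow> of_rat y < c \<Longrightarrow> f x = f y"
    and "c < of_rat x \<Longrightarrow> of_rat x < c + \<delta> \<Longrightarrow> c < of_rat y \<Longrightarrow> of_rat y < c + \<delta> \<Longrightarrow> f x = f y"
proof -
  have gen: "f x = f y" if H: "lo < of_rat x" "of_rat x < hi" "lo < of_rat y" "of_rat y < hi"
    and HC: "\<And>z. z \<in> C \<Longrightarrow> \<not> (lo < z \<and> z < hi)" for x y lo hi
  proof -
    have s: "sim C u v" if s1: "lo < of_rat u" "of_rat u < hi" "lo < of_rat v" "of_rat v < hi"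
        "of_rat u \<le> (of_rat v::real)" for u v
    proof (rule sim_free)
      show "of_rat u \<le> (of_rat v::real)" by (rule s1(5))
      fix z assume "z \<in> C"
      then have "\<not> (lo < z \<and> z < hi)" by (rule HC)
      then show "\<not> (of_rat u \<le> z \<and> z \<le> of_rat v)" using s1 by linarith
    qed
    show ?thesis
    proof (cases "of_rat x \<le> (of_rat y::real)")
      case True then show ?thesis using s[OF H True] assms(1) valid_def by blast
    next
      case False then show ?thesis using s[of y x] H assms(1) valid_def by force
    qed
  qed
  show "c - \<delta> < of_rat x \<Longrightarrow> of_rat x < c \<Longrightarrow> c - \<delta> < of_rat y \<Longrightarrow> of_rat y < c \<Longrightarrow> f x = f y"
  proof (rule gen[where lo="c-\<delta>" and hi=c])
    fix z assume "z \<in> C"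
    then show "\<not> (c - \<delta> < z \<and> z < c)" using assms(2)[of z] by (cases "z = c") (auto simp: abs_if split: if_splits)
  qed
  show "c < of_rat x \<Longrightarrow> of_rat x < c + \<delta> \<Longrightarrow> c < of_rat y \<Longrightarrow> of_rat y < c + \<delta> \<Longrightarrow> f x = f y"
  proof (rule gen[where lo="c" and hi="c+\<delta>"])
    fix z assume "z \<in> C"
    then show "\<not> (c < z \<and> z < c + \<delta>)" using assms(2)[of z] by (cases "z = c") (auto simp: abs_if split: if_splits)
  qed
qed

lemma exists_h:
  fixes c \<delta> :: real and l :: nat
  assumes dpos: "\<delta> > 0"
  obtains h :: "rat \<Rightarrow> rat" where "strict_mono h"
    "\<And>i. c - \<delta> < of_rat (h i) \<and> of_rat (h i) < c + \<delta>"
    "\<And>i. i < of_nat l \<Longrightarrow> of_rat (h i) < c"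
    "\<And>i. i > of_nat l \<Longrightarrow> of_rat (h i) > c"
    "of_rat (h (of_nat l)) \<le> c" "c \<in> \<rat> \<Longrightarrow> of_rat (h (of_nat l)) = c"
proof -
  obtain r1 r2 :: rat where r: "c - \<delta>/2 < of_rat r1" "of_rat r1 \<le> c" "c \<le> of_rat r2" "of_rat r2 < c + \<delta>/2"
    "c \<in> \<rat> \<Longrightarrow> of_rat r1 = c"
  proof (cases "c \<in> \<rat>")
    case True
    obtain q where q: "c = of_rat q" using True Rats_cases by blast
    show ?thesis by (rule that[of q q]) (use q dpos in simp_all)
  next
    case False
    obtain r1 where "c - \<delta>/2 < of_rat r1" "of_rat r1 < c" using of_rat_dense[of "c - \<delta>/2" c] dpos by auto
    moreover obtain r2 where "c < of_rat r2" "of_rat r2 < c + \<delta>/2" using of_rat_dense[of c "c + \<delta>/2"] dpos by auto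
    ultimately show ?thesis using that[of r1 r2] False by auto
  qed
  have "of_rat r1 \<le> (of_rat r2 :: real)" using r by linarith
  then have r12: "r1 \<le> r2" by (simp only: of_rat_less_eq)
  obtain w :: rat where w: "(0::real) < of_rat w" "of_rat w < \<delta>/2" using of_rat_dense[of 0 "\<delta>/2"] dpos by auto
  have wpos: "w > 0" using w by simp
  define h where "h i = (if i \<le> of_nat l then r1 else r2) + w * sig (i - of_nat l)" for i
  define t where "t i = w * sig (i - of_nat l)" for i
  have tb: "\<bar>t i\<bar> < w" for i
  proof -
    have "\<bar>t i\<bar> = w * \<bar>sig (i - of_nat l)\<bar>" using wpos by (simp add: t_def abs_mult)
    also have "\<dots> < w * 1" using sig_bound wpos by (intro mult_strict_left_mono) auto
    finally show ?thesis by simp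
  qed
  have tneg: "i < of_nat l \<Longrightarrow> t i < 0" for i using wpos sig_neg[of "i - of_nat l"] by (simp add: t_def mult_pos_neg)
  have tpos: "i > of_nat l \<Longrightarrow> t i > 0" for i using wpos sig_pos[of "i - of_nat l"] by (simp add: t_def)
  have hreal: "of_rat (h i) = (if i \<le> of_nat l then of_rat r1 else of_rat r2) + (of_rat (t i) :: real)" for i
    by (simp add: h_def t_def of_rat_add)
  have tbr: "(of_rat (t i)::real) < \<delta>/2 \<and> -(\<delta>/2) < (of_rat (t i)::real)" for i
  proof -
    have "t i < w" "-w < t i" using tb[of i] by (simp_all add: abs_less_iff)
    then have "(of_rat (t i)::real) < of_rat w" "(of_rat (-w)::real) < of_rat (t i)"
      by (simp_all only: of_rat_less)
    then show ?thesis using w by (simp add: of_rat_minus)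
  qed
  show ?thesis
  proof (rule that)
    show "strict_mono h"
    proof (rule strict_monoI)
      fix i j :: rat assume ij: "i < j"
      have sm: "w * sig (i - of_nat l) < w * sig (j - of_nat l)"
        using ij wpos sig_mono[of "i - of_nat l" "j - of_nat l"] by simp
      show "h i < h j"
      proof (cases "j \<le> of_nat l")
        case True then show ?thesis using ij sm by (simp add: h_def)
      next
        case False
        show ?thesis
        proof (cases "i \<le> of_nat l")
          case True
          have "t i \<le> 0" using tneg[of i] True by (cases "i = of_nat l") (auto simp: t_def sig_0)
          then show ?thesis using True False tpos[of j] r12 by (simp add: h_def t_def)
        next
          case False2: False
          then show ?thesis using False sm by (simp add: h_def)
        qed
      qed
    qed
  next
    fix i show "c - \<delta> < of_rat (h i) \<and> of_rat (h i) < c + \<delta>"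
    proof (cases "i \<le> of_nat l")
      case True then have "of_rat (h i) = of_rat r1 + (of_rat (t i)::real)" using hreal[of i] by simp
      then show ?thesis using tbr[of i] r by linarith
    next
      case False then have "of_rat (h i) = of_rat r2 + (of_rat (t i)::real)" using hreal[of i] by simp
      then show ?thesis using tbr[of i] r by linarith
    qed
  next
    fix i :: rat assume "i < of_nat l"
    then have "t i < 0" by (rule tneg)
    then have "(of_rat (t i)::real) < 0" by (simp only: of_rat_less_0_iff)
    moreover have "(of_rat (h i)::real) = of_rat r1 + of_rat (t i)" using hreal[of i] \<open>i < of_nat l\<close> by simp
    ultimately show "of_rat (h i) < c" using r(2) by linarith
  next
    fix i :: rat assume "i > of_nat l"
    then have "t i > 0" by (rule tpos)
    then have "(of_rat (t i)::real) > 0" by (simp only: zero_less_of_rat_iff)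
    moreover have "(of_rat (h i)::real) = of_rat r2 + of_rat (t i)" using hreal[of i] \<open>i > of_nat l\<close> by simp
    ultimately show "of_rat (h i) > c" using r(3) by linarith
  next
    show "of_rat (h (of_nat l)) \<le> c" using r by (simp add: h_def sig_0)
  next
    assume "c \<in> \<rat>" then show "of_rat (h (of_nat l)) = c" using r by (simp add: h_def sig_0)
  qed
qed

lemma Dpoint:
  fixes c \<delta> :: real and l :: nat and h :: "rat \<Rightarrow> rat"
  assumes V: "valid C f" and sep: "\<And>x. x \<in> C \<Longrightarrow> x \<noteq> c \<Longrightarrow> \<delta> \<le> \<bar>x - c\<bar>"
    and cD: "c \<in> Dset f" and dpos: "\<delta> > 0"
    and hb: "\<And>i. c - \<delta> < of_rat (h i) \<and> of_rat (h i) < c + \<delta>"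
    and hl: "\<And>i. i < of_nat l \<Longrightarrow> of_rat (h i) < c"
    and hr: "\<And>i. i > of_nat l \<Longrightarrow> of_rat (h i) > c"
    and hq: "c \<in> \<rat> \<Longrightarrow> of_rat (h (of_nat l)) = c"
  shows "(of_nat l :: real) \<in> Dset (\<lambda>i. f (h i))"
  unfolding Dset_def
proof (intro CollectI allI impI)
  fix \<epsilon> :: real assume epos: "\<epsilon> > 0"
  obtain e :: rat where e: "(0::real) < of_rat e" "of_rat e < \<epsilon>" using of_rat_dense[of 0 \<epsilon>] epos by auto
  define iL where "iL = of_nat l - e"
  define iR where "iR = of_nat l + e"
  have iLl: "iL < of_nat l" and iRl: "iR > of_nat l" using e by (auto simp: iL_def iR_def)
  have near: "\<bar>of_rat i - of_nat l\<bar> < \<epsilon>" if "i \<in> {iL, of_nat l, iR}" for i :: rat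
    using that e epos by (auto simp: iL_def iR_def of_rat_add of_rat_diff)
  have rep: "\<exists>i\<in>{iL, of_nat l, iR}. f z = f (h i)" if z: "\<bar>of_rat z - c\<bar> < \<delta>" for z
  proof -
    consider "of_rat z < c" | "of_rat z = c" | "of_rat z > c" by fastforce
    then show ?thesis
    proof cases
      case 1
      have "f z = f (h iL)"
        by (rule valid_sides(1)[OF V sep]) (use z 1 hb[of iL] hl[OF iLl] in \<open>auto simp: abs_less_iff\<close>)
      then show ?thesis by blast
    next
      case 2
      then have "c \<in> \<rat>" by (metis Rats_of_rat)
      then have "of_rat (h (of_nat l)) = (of_rat z :: real)" using hq 2 by simp
      then have "h (of_nat l) = z" by simp
      then show ?thesis by auto
    next
      case 3
      have "f z = f (h iR)"
        by (rule valid_sides(2)[OF V sep]) (use z 3 hb[of iR] hr[OF iRl] in \<open>auto simp: abs_less_iff\<close>)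
      then show ?thesis by blast
    qed
  qed
  obtain x y where xy: "\<bar>of_rat x - c\<bar> < \<delta>" "\<bar>of_rat y - c\<bar> < \<delta>" "f x \<noteq> f y"
    using cD dpos unfolding Dset_def by blast
  obtain i1 where i1: "i1 \<in> {iL, of_nat l, iR}" "f x = f (h i1)" using rep[OF xy(1)] by blast
  obtain i2 where i2: "i2 \<in> {iL, of_nat l, iR}" "f y = f (h i2)" using rep[OF xy(2)] by blast
  show "\<exists>i j. \<bar>of_rat i - of_nat l\<bar> < \<epsilon> \<and> \<bar>of_rat j - of_nat l\<bar> < \<epsilon> \<and> f (h i) \<noteq> f (h j)"
    using near[OF i1(1)] near[OF i2(1)] i1(2) i2(2) xy(3) by metis
qed

lemma sorted_obtain:
  fixes S :: "real set"
  assumes "finite S"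
  obtains cs where "sorted_wrt (<) cs" "set cs = S" "length cs = card S"
  using assms by (metis sorted_list_of_set.length_sorted_key_list_of_set
      sorted_list_of_set.set_sorted_key_list_of_set strict_sorted_list_of_set)

definition rho :: "nat \<Rightarrow> nat \<Rightarrow> nat \<Rightarrow> nat \<Rightarrow> nat \<Rightarrow> nat" where
  "rho k m N l q = (if q < m then k + l*m + q else if q < m + k then q - m else q + (k + N*m))"

lemma inj_rho: "l < N \<Longrightarrow> inj (rho k m N l)"
proof (rule injI)
  fix x y assume lN: "l < N" and e: "rho k m N l x = rho k m N l y"
  have b: "k + l*m + q < k + N*m" if "q < m" for q using blk_lt[OF lN that] by simp
  show "x = y" using e b[of x] b[of y] unfolding rho_def by (auto split: if_splits)
qed

lemma rho_satl:
  assumes lN: "l < N" and fv: "fv \<psi> \<subseteq> {..<m+k}" and la: "length a = k"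
    and lb: "\<And>i. length (b i) = m"
  shows "satl M (ren (rho k m N l) \<psi>) (a @ bcomb N hs b i) = satl M \<psi> (b (hs l i) @ a)"
proof (rule satl_ren[OF inj_rho[OF lN] fv])
  fix v assume v: "v \<in> {..<m+k}"
  have lb': "length (bcomb N hs b i) = N*m"
    unfolding bcomb_def by (subst length_concat_uniform) (auto simp: lb)
  show "rho k m N l v < length (a @ bcomb N hs b i) \<and> v < length (b (hs l i) @ a) \<and>
        (a @ bcomb N hs b i) ! rho k m N l v = (b (hs l i) @ a) ! v"
  proof (cases "v < m")
    case True
    have "bcomb N hs b i ! (l*m + v) = b (hs l i) ! v"
      unfolding bcomb_def using True lN by (subst concat_nth_uniform) (auto simp: lb)
    then show ?thesis using True blk_lt[OF lN True] la lb' lb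
      by (simp add: rho_def nth_append add.assoc)
  next
    case False
    then show ?thesis using v la lb' lb by (auto simp: rho_def nth_append)
  qed
qed

lemma fv_rho: "l < N \<Longrightarrow> fv \<psi> \<subseteq> {..<m+k} \<Longrightarrow> fv (ren (rho k m N l) \<psi>) \<subseteq> {..<k + N*m}"
  using blk_lt[of l N] by (force simp: fv_ren[OF inj_rho] rho_def)

lemma backward:
  fixes M :: "('a,'f,'r) fo_struct"
  assumes loc: "\<forall>m \<phi>. fv \<phi> \<subseteq> {..<k + m} \<longrightarrow> local_dp_rank_le M k p \<phi> m n"
  shows "dp_rank_le M k p n"
  unfolding dp_rank_le_def
proof (intro allI impI)
  fix a m b assume ab: "realizes M k a p \<and> indiscernible M m b"
  have la: "length a = k" using ab realizes_len by blast
  have lb: "\<And>i. length (b i) = m" using ab indisc_len by blast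
  define fp where "fp \<psi> = (\<lambda>i. satl M \<psi> (b i @ a))" for \<psi> :: "('f,'r) fm"
  have hasC: "\<exists>C. finite C \<and> card C \<le> n \<and> valid C (fp \<psi>)" if fv: "fv \<psi> \<subseteq> {..<m+k}" for \<psi>
  proof -
    have L: "local_dp_rank_le M k p (ren (swp m k) \<psi>) m n"
      using loc fv_swp[OF fv] by blast
    obtain C where C: "finite C" "card C \<le> n"
      "\<forall>i j. sim C i j \<longrightarrow> (satl M (ren (swp m k) \<psi>) (a @ b i) \<longleftrightarrow> satl M (ren (swp m k) \<psi>) (a @ b j))"
      using L[unfolded local_dp_rank_le_def, rule_format, OF ab] by blast
    have e: "satl M (ren (swp m k) \<psi>) (a @ b i) = fp \<psi> i" for i
      unfolding fp_def by (rule swp_satl[OF fv lb la])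
    have "valid C (fp \<psi>)" unfolding valid_def
    proof (intro allI impI)
      fix i j assume "sim C i j"
      then show "fp \<psi> i = fp \<psi> j" using C(3) e by metis
    qed
    then show ?thesis using C(1,2) by blast
  qed
  define D where "D = (\<Union>\<psi>\<in>{\<psi>. fv \<psi> \<subseteq> {..<m+k}}. Dset (fp \<psi>))"
  have finD: "finite D \<and> card D \<le> n"
  proof (rule ccontr)
    assume nf: "\<not> (finite D \<and> card D \<le> n)"
    obtain S where S: "S \<subseteq> D" "finite S" "card S = Suc n"
    proof (cases "finite D")
      case True
      then have "Suc n \<le> card D" using nf by simp
      then show ?thesis using that obtain_subset_with_card_n by metis
    next
      case False
      then show ?thesis using that infinite_arbitrarily_large by metis
    qed
    obtain cs where cs: "sorted_wrt (<) cs" "set cs = S" "length cs = Suc n"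
      using sorted_obtain[OF S(2)] S(3) by metis
    have exPC: "\<forall>l. \<exists>x. l < Suc n \<longrightarrow> fv (fst x) \<subseteq> {..<m+k} \<and> cs ! l \<in> Dset (fp (fst x)) \<and>
        finite (snd x) \<and> card (snd x) \<le> n \<and> valid (snd x) (fp (fst x))"
    proof
      fix l
      show "\<exists>x. l < Suc n \<longrightarrow> fv (fst x) \<subseteq> {..<m+k} \<and> cs ! l \<in> Dset (fp (fst x)) \<and>
        finite (snd x) \<and> card (snd x) \<le> n \<and> valid (snd x) (fp (fst x))"
      proof (cases "l < Suc n")
        case True
        then have "cs ! l \<in> D" using cs S(1) nth_mem by (metis subsetD)
        then obtain \<psi> where \<psi>: "fv \<psi> \<subseteq> {..<m+k}" "cs ! l \<in> Dset (fp \<psi>)" unfolding D_def by blast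
        obtain C where "finite C" "card C \<le> n" "valid C (fp \<psi>)" using hasC[OF \<psi>(1)] by blast
        then show ?thesis using \<psi> by (intro exI[of _ "(\<psi>, C)"]) auto
      qed auto
    qed
    obtain PC where PC0: "\<forall>l. l < Suc n \<longrightarrow> fv (fst (PC l)) \<subseteq> {..<m+k} \<and> cs ! l \<in> Dset (fp (fst (PC l))) \<and>
        finite (snd (PC l)) \<and> card (snd (PC l)) \<le> n \<and> valid (snd (PC l)) (fp (fst (PC l)))"
      using choice[OF exPC] by blast
    have PC: "\<And>l. l < Suc n \<Longrightarrow> fv (fst (PC l)) \<subseteq> {..<m+k} \<and> cs ! l \<in> Dset (fp (fst (PC l))) \<and>
        finite (snd (PC l)) \<and> card (snd (PC l)) \<le> n \<and> valid (snd (PC l)) (fp (fst (PC l)))"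
      using PC0 by blast
    define \<psi>s where "\<psi>s l = fst (PC l)" for l
    define Cs where "Cs l = snd (PC l)" for l
    define Fs where "Fs = S \<union> (\<Union>l<Suc n. Cs l)"
    have finFs: "finite Fs" unfolding Fs_def Cs_def using S(2) PC by auto
    define Pairs where "Pairs = (\<lambda>(x,y). \<bar>x - y\<bar>) ` {(x,y). x \<in> Fs \<and> y \<in> Fs \<and> x \<noteq> y}"
    have finP: "finite Pairs"
    proof -
      have "{(x,y). x \<in> Fs \<and> y \<in> Fs \<and> x \<noteq> y} \<subseteq> Fs \<times> Fs" by auto
      then show ?thesis unfolding Pairs_def using finFs finite_subset by blast
    qed
    define \<delta> where "\<delta> = Min (insert 1 Pairs) / 3"
    have dpos: "\<delta> > 0" unfolding \<delta>_def using finP by (auto simp: Pairs_def Min_gr_iff)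
    have dsep: "3 * \<delta> \<le> \<bar>x - y\<bar>" if "x \<in> Fs" "y \<in> Fs" "x \<noteq> y" for x y
    proof -
      have "\<bar>x - y\<bar> \<in> Pairs" unfolding Pairs_def using that by force
      then show ?thesis unfolding \<delta>_def using finP by auto
    qed
    have csF: "cs ! l \<in> Fs" if "l < Suc n" for l using that cs S unfolding Fs_def by auto
    have CsF: "x \<in> Fs" if "x \<in> Cs l" "l < Suc n" for x l using that unfolding Fs_def by auto
    have exH: "\<forall>l. \<exists>h :: rat \<Rightarrow> rat. strict_mono h \<and>
      (\<forall>i. cs!l - \<delta> < of_rat (h i) \<and> of_rat (h i) < cs!l + \<delta>) \<and>
      (\<forall>i. i < of_nat l \<longrightarrow> of_rat (h i) < cs!l) \<and>
      (\<forall>i. i > of_nat l \<longrightarrow> of_rat (h i) > cs!l) \<and>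
      (cs!l \<in> \<rat> \<longrightarrow> of_rat (h (of_nat l)) = cs!l)"
    proof
      fix l
      obtain h :: "rat \<Rightarrow> rat" where "strict_mono h"
        "\<And>i. cs!l - \<delta> < of_rat (h i) \<and> of_rat (h i) < cs!l + \<delta>"
        "\<And>i. i < of_nat l \<Longrightarrow> of_rat (h i) < cs!l"
        "\<And>i. i > of_nat l \<Longrightarrow> of_rat (h i) > cs!l"
        "of_rat (h (of_nat l)) \<le> cs!l" "cs!l \<in> \<rat> \<Longrightarrow> of_rat (h (of_nat l)) = cs!l"
        by (rule exists_h[OF dpos]) blast
      then show "\<exists>h :: rat \<Rightarrow> rat. strict_mono h \<and>
      (\<forall>i. cs!l - \<delta> < of_rat (h i) \<and> of_rat (h i) < cs!l + \<delta>) \<and>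
      (\<forall>i. i < of_nat l \<longrightarrow> of_rat (h i) < cs!l) \<and>
      (\<forall>i. i > of_nat l \<longrightarrow> of_rat (h i) > cs!l) \<and>
      (cs!l \<in> \<rat> \<longrightarrow> of_rat (h (of_nat l)) = cs!l)" by blast
    qed
    obtain hs :: "nat \<Rightarrow> rat \<Rightarrow> rat" where hsP: "\<forall>l. strict_mono (hs l) \<and>
      (\<forall>i. cs!l - \<delta> < of_rat (hs l i) \<and> of_rat (hs l i) < cs!l + \<delta>) \<and>
      (\<forall>i. i < of_nat l \<longrightarrow> of_rat (hs l i) < cs!l) \<and>
      (\<forall>i. i > of_nat l \<longrightarrow> of_rat (hs l i) > cs!l) \<and>
      (cs!l \<in> \<rat> \<longrightarrow> of_rat (hs l (of_nat l)) = cs!l)"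
      using choice[OF exH] by blast
    have hs: "\<And>l. strict_mono (hs l)"
      "\<And>l i. cs!l - \<delta> < of_rat (hs l i) \<and> of_rat (hs l i) < cs!l + \<delta>"
      "\<And>l i. i < of_nat l \<Longrightarrow> of_rat (hs l i) < cs!l"
      "\<And>l i. i > of_nat l \<Longrightarrow> of_rat (hs l i) > cs!l"
      "\<And>l. cs!l \<in> \<rat> \<Longrightarrow> of_rat (hs l (of_nat l)) = cs!l"
      using hsP by blast+
    have hsep: "hs l i < hs l' i'" if "l < l'" "l' < Suc n" for l l' i i'
    proof -
      have "cs ! l < cs ! l'" using cs(1,3) that by (simp add: sorted_wrt_iff_nth_less)
      moreover have "3 * \<delta> \<le> \<bar>cs ! l - cs ! l'\<bar>" using dsep[OF csF[of l] csF[of l']] that calculation by simp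
      ultimately have "cs ! l + \<delta> < cs ! l' - \<delta>" using dpos by linarith
      then have "of_rat (hs l i) < (of_rat (hs l' i') :: real)" using hs(2)[of l i] hs(2)[of l' i'] by linarith
      then show ?thesis by (simp add: of_rat_less)
    qed
    define b' where "b' = bcomb (Suc n) hs b"
    have indb': "indiscernible M (Suc n * m) b'"
      unfolding b'_def by (rule bcomb_indisc) (use ab hs(1) hsep in auto)
    define \<phi> where "\<phi> = fxor (map (\<lambda>l. ren (rho k m (Suc n) l) (\<psi>s l)) [0..<Suc n])"
    have fv\<phi>: "fv \<phi> \<subseteq> {..<k + Suc n * m}"
      unfolding \<phi>_def fv_fxor
    proof (intro UN_least)
      fix x assume "x \<in> set (map (\<lambda>l. ren (rho k m (Suc n) l) (\<psi>s l)) [0..<Suc n])"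
      then obtain l where l: "l < Suc n" "x = ren (rho k m (Suc n) l) (\<psi>s l)" by (auto simp del: upt_Suc)
      show "fv x \<subseteq> {..<k + Suc n * m}" unfolding l(2) by (rule fv_rho[OF l(1)]) (use PC[OF l(1)] in \<open>simp add: \<psi>s_def\<close>)
    qed
    define g where "g l i = fp (\<psi>s l) (hs l i)" for l i
    have G: "satl M \<phi> (a @ b' i) = foldr (\<lambda>x acc. x \<noteq> acc) (map (\<lambda>l. g l i) [0..<Suc n]) False" for i
    proof -
      have eqmap: "map (sat M (env M (a @ b' i))) (map (\<lambda>l. ren (rho k m (Suc n) l) (\<psi>s l)) [0..<Suc n])
          = map (\<lambda>l. g l i) [0..<Suc n]"
      proof (rule nth_equalityI)
        fix q assume "q < length (map (sat M (env M (a @ b' i))) (map (\<lambda>l. ren (rho k m (Suc n) l) (\<psi>s l)) [0..<Suc n]))"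
        then have q: "q < Suc n" by simp
        have fvq: "fv (\<psi>s q) \<subseteq> {..<m+k}" using PC[OF q] by (simp add: \<psi>s_def)
        have "satl M (ren (rho k m (Suc n) q) (\<psi>s q)) (a @ b' i) = g q i"
          unfolding b'_def g_def fp_def by (rule rho_satl[OF q fvq la lb])
        then show "map (sat M (env M (a @ b' i))) (map (\<lambda>l. ren (rho k m (Suc n) l) (\<psi>s l)) [0..<Suc n]) ! q
          = map (\<lambda>l. g l i) [0..<Suc n] ! q" using q by (simp add: satl_def del: upt_Suc)
      qed (simp del: upt_Suc)
      show ?thesis unfolding satl_def \<phi>_def sat_fxor eqmap by (rule refl)
    qed
    have L: "local_dp_rank_le M k p \<phi> (Suc n * m) n" using loc fv\<phi> by blast
    have rb: "realizes M k a p \<and> indiscernible M (Suc n * m) b'" using ab indb' by blast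
    obtain C' where C': "finite C'" "card C' \<le> n"
      "\<forall>i j. sim C' i j \<longrightarrow> (satl M \<phi> (a @ b' i) \<longleftrightarrow> satl M \<phi> (a @ b' j))"
      using L[unfolded local_dp_rank_le_def, rule_format, OF rb] by blast
    have vC': "valid C' (\<lambda>i. satl M \<phi> (a @ b' i))" using C'(3) unfolding valid_def by blast
    have sub: "Dset (\<lambda>i. satl M \<phi> (a @ b' i)) \<subseteq> C'" by (rule F1[OF C'(1) vC'])
    have inD: "(of_nat l :: real) \<in> Dset (\<lambda>i. satl M \<phi> (a @ b' i))" if lN: "l < Suc n" for l
    proof -
      have vl: "valid (Cs l) (fp (\<psi>s l))" using PC[OF lN] unfolding Cs_def \<psi>s_def by blast
      have sepl: "\<delta> \<le> \<bar>x - cs ! l\<bar>" if "x \<in> Cs l" "x \<noteq> cs ! l" for x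
        using dsep[OF CsF[OF that(1) lN] csF[OF lN] that(2)] dpos by linarith
      have cD: "cs ! l \<in> Dset (fp (\<psi>s l))" using PC[OF lN] unfolding \<psi>s_def by blast
      have Dl: "(of_nat l :: real) \<in> Dset (g l)"
        unfolding g_def
        by (rule Dpoint[OF vl sepl cD dpos]) (use hs in auto)
      have other: "g l' i = g l' j" if o1: "l' < Suc n" "l' \<noteq> l"
          "\<bar>of_rat i - of_nat l\<bar> < (1/2::real)" "\<bar>of_rat j - of_nat l\<bar> < (1/2::real)" for l' i j
      proof -
        have vl': "valid (Cs l') (fp (\<psi>s l'))" using PC[OF o1(1)] unfolding Cs_def \<psi>s_def by blast
        have sepl': "\<delta> \<le> \<bar>x - cs ! l'\<bar>" if "x \<in> Cs l'" "x \<noteq> cs ! l'" for x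
          using dsep[OF CsF[OF that(1) \<open>l' < Suc n\<close>] csF[OF \<open>l' < Suc n\<close>] that(2)] dpos by linarith
        consider "l' < l" | "l < l'" using o1(2) by linarith
        then show ?thesis
        proof cases
          case 1
          then have "real l' + 1 \<le> real l" by simp
          then have "(of_nat l' :: real) < of_rat i" "(of_nat l' :: real) < of_rat j"
            using o1(3,4) unfolding abs_less_iff by linarith+
          then have "of_nat l' < i" "of_nat l' < j" by (metis of_rat_less of_rat_of_nat_eq)+
          then show ?thesis unfolding g_def
            using valid_sides(2)[OF vl' sepl', of "hs l' i" "hs l' j"] hs(2,4) by blast
        next
          case 2
          then have "real l + 1 \<le> real l'" by simp
          then have "of_rat i < (of_nat l' :: real)" "of_rat j < (of_nat l' :: real)"
            using o1(3,4) unfolding abs_less_iff by linarith+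
          then have "i < of_nat l'" "j < of_nat l'" by (metis of_rat_less of_rat_of_nat_eq)+
          then show ?thesis unfolding g_def
            using valid_sides(1)[OF vl' sepl', of "hs l' i" "hs l' j"] hs(2,3) by blast
        qed
      qed
      show ?thesis unfolding Dset_def
      proof (intro CollectI allI impI)
        fix \<epsilon> :: real assume epos: "\<epsilon> > 0"
        obtain i j where ij: "\<bar>of_rat i - of_nat l\<bar> < min \<epsilon> (1/2)" "\<bar>of_rat j - of_nat l\<bar> < min \<epsilon> (1/2)"
          "g l i \<noteq> g l j"
        proof -
          have mpos: "min \<epsilon> (1/2) > (0::real)" using epos by simp
          have "\<forall>\<epsilon>>0. \<exists>i j. \<bar>of_rat i - of_nat l\<bar> < \<epsilon> \<and> \<bar>of_rat j - (of_nat l::real)\<bar> < \<epsilon> \<and> g l i \<noteq> g l j"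
            using Dl unfolding Dset_def by (rule CollectD)
          then show ?thesis using mpos that by blast
        qed
        have "satl M \<phi> (a @ b' i) \<noteq> satl M \<phi> (a @ b' j)"
          unfolding G
        proof (rule xor_diff)
          show "map (\<lambda>l. g l i) [0..<Suc n] ! l \<noteq> map (\<lambda>l. g l j) [0..<Suc n] ! l"
            using ij(3) lN by (simp del: upt_Suc)
          show "\<forall>q<length (map (\<lambda>l. g l i) [0..<Suc n]). q \<noteq> l \<longrightarrow>
              map (\<lambda>l. g l i) [0..<Suc n] ! q = map (\<lambda>l. g l j) [0..<Suc n] ! q"
            using other ij(1,2) by (simp del: upt_Suc)
        qed (use lN in \<open>simp_all del: upt_Suc\<close>)
        then show "\<exists>i j. \<bar>of_rat i - of_nat l\<bar> < \<epsilon> \<and> \<bar>of_rat j - of_nat l\<bar> < \<epsilon> \<and>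
             satl M \<phi> (a @ b' i) \<noteq> satl M \<phi> (a @ b' j)"
          using ij(1,2) \<open>satl M \<phi> (a @ b' i) \<noteq> satl M \<phi> (a @ b' j)\<close>
          by (intro exI[of _ i] exI[of _ j]) simp
      qed
    qed
    have "(of_nat ` {..<Suc n} :: real set) \<subseteq> C'" using inD sub by auto
    then have "card (of_nat ` {..<Suc n} :: real set) \<le> card C'" using C'(1) by (rule card_mono[rotated])
    moreover have "card (of_nat ` {..<Suc n} :: real set) = Suc n" by (simp add: card_image)
    ultimately show False using C'(2) by simp
  qed
  show "\<exists>C. finite C \<and> card C \<le> n \<and> (\<forall>i j. sim C i j \<longrightarrow> same_tp M m (b i) (b j) a)"
  proof (rule exI[of _ D], intro conjI allI impI)
    fix i j assume s: "sim D i j"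
    show "same_tp M m (b i) (b j) a" unfolding same_tp_def
    proof (intro allI impI)
      fix \<psi> :: "('f,'r) fm" assume fv: "fv \<psi> \<subseteq> {..<m + length a}"
      then have fv': "fv \<psi> \<subseteq> {..<m + k}" using la by simp
      obtain C where "finite C" "valid C (fp \<psi>)" using hasC[OF fv'] by blast
      then have "valid (Dset (fp \<psi>)) (fp \<psi>)" by (rule F2)
      moreover have "Dset (fp \<psi>) \<subseteq> D" unfolding D_def using fv' by blast
      ultimately have "valid D (fp \<psi>)" by (rule valid_mono[rotated])
      then have "fp \<psi> i = fp \<psi> j" using s unfolding valid_def by blast
      then show "satl M \<psi> (b i @ a) = satl M \<psi> (b j @ a)" unfolding fp_def .
    qed
  qed (use finD in blast)+
qed

theorem proposition2p3:
  fixes M :: "('a, 'f, 'r) fo_struct"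
    and p :: "(('f, 'r) fm \<times> 'a list) set"
    and k n :: nat
  assumes "monster M"
    and "partial_type M k p"
  shows "dp_rank_le M k p n \<longleftrightarrow>
         (\<forall>m \<phi>. fv \<phi> \<subseteq> {..<k + m} \<longrightarrow> local_dp_rank_le M k p \<phi> m n)"
  using forward backward by blast

end
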